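(* Let $\Omega\subset\mathbb{R}^N$ be a bounded open set and let $p,q:\Omega\to[1,\infty)$ be measurable with $q(x)\le p(x)\le p_+<\infty$ for all $x\in\Omega$. Let $s(x)=\frac{1}{p(x)-q(x)}\in(0,\infty]$ (with $s(x)=\infty$ where $p(x)=q(x)$). If there exists $a>1$ such that $$\int_0^{|\Omega|}a^{s^*(t)}\,dt=\infty,$$ then $L^{p(\cdot)}(\Omega)$ is not almost-compactly embedded in $L^{q(\cdot)}(\Omega)$.
   Context: For a measurable function $u$ on $\Omega$, $u^*(t)=\inf\{\lambda>0:|\{x\in\Omega:|u(x)|>\lambda\}|\le t\}$, $t\ge0$ (non-increasing rearrangement). For measurable $e:\Omega\to[1,\infty)$, $\|u\|_{e(\cdot)}=\inf\{\lambda>0:\int_\Omega|u(x)/\lambda|^{e(x)}dx\le1\}$ and $L^{e(\cdot)}(\Omega)$ is the set of measurable $u$ with finite norm. Almost-compact embedding: for Banach function spaces $X,Y$ on $\Omega$, $X$ is almost-compactly embedded in $Y$ if for every sequence $\{E_n\}$ of measurable subsets of $\Omega$ with $\chi_{E_n}\to0$ pointwise a.e. one has $\lim_{n\to\infty}\sup_{\|u\|_X\le1}\|u\chi_{E_n}\|_Y=0$. *)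

theory Defs
  imports "HOL-Analysis.Analysis"
begin

text \<open>Luxemburg norm of the variable exponent space L^{e(.)}(Omega), valued in ennreal
  (infinite iff the defining set is empty, i.e. u is not in L^{e(.)}).\<close>
definition var_norm :: "('a::euclidean_space \<Rightarrow> real) \<Rightarrow> 'a set \<Rightarrow> ('a \<Rightarrow> real) \<Rightarrow> ennreal" where
  "var_norm e \<Omega> u = Inf {ennreal l | l. l > 0 \<and>
      (\<integral>\<^sup>+ x \<in> \<Omega>. ennreal (\<bar>u x / l\<bar> powr e x) \<partial>lebesgue) \<le> 1}"

definition almost_compact_emb :: "('a::euclidean_space \<Rightarrow> real) \<Rightarrow> ('a \<Rightarrow> real) \<Rightarrow> 'a set \<Rightarrow> bool" where
  "almost_compact_emb p q \<Omega> \<longleftrightarrow>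
    (\<forall>E :: nat \<Rightarrow> 'a set.
       (\<forall>n. E n \<in> sets (lebesgue_on \<Omega>)) \<and>
       (AE x in lebesgue_on \<Omega>. (\<lambda>n. indicator (E n) x :: real) \<longlonglongrightarrow> 0) \<longrightarrow>
       (\<lambda>n. SUP u \<in> {u. u \<in> borel_measurable (lebesgue_on \<Omega>) \<and> var_norm p \<Omega> u \<le> 1}.
              var_norm q \<Omega> (\<lambda>x. u x * indicator (E n) x)) \<longlonglongrightarrow> 0)"

definition rearr :: "'a::euclidean_space set \<Rightarrow> ('a \<Rightarrow> ereal) \<Rightarrow> real \<Rightarrow> ereal" where
  "rearr \<Omega> f t = Inf {ereal l | l. l > 0 \<and>
      emeasure lebesgue {x \<in> \<Omega>. ereal l < \<bar>f x\<bar>} \<le> ennreal t}"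

definition epow :: "real \<Rightarrow> ereal \<Rightarrow> ennreal" where
  "epow a y = (if y = \<infinity> then \<infinity> else if y = -\<infinity> then 0 else ennreal (a powr real_of_ereal y))"

end

theory Submission
  imports Defs
begin


lemma keyK:
  fixes E \<Omega> :: "'a::euclidean_space set" and p q :: "'a \<Rightarrow> real"
  assumes \<Omega>: "\<Omega> \<in> sets lebesgue" and E: "E \<in> sets lebesgue" "E \<subseteq> \<Omega>"
    and m: "emeasure lebesgue E = ennreal m" "m > 0"
    and pm: "p \<in> borel_measurable (lebesgue_on \<Omega>)"
    and q1: "\<And>x. x\<in>E \<Longrightarrow> 1 \<le> q x" and qp: "\<And>x. x \<in> E \<Longrightarrow> q x \<le> p x"
    and d: "\<And>x. x\<in>E \<Longrightarrow> p x - q x \<le> \<delta>" "0 \<le> \<delta>"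
  shows "\<exists>u. u \<in> borel_measurable (lebesgue_on \<Omega>) \<and> var_norm p \<Omega> u \<le> 1 \<and>
           ennreal (min 1 (m powr \<delta>)) \<le> var_norm q \<Omega> (\<lambda>x. u x * indicator E x)"
proof -
  define u where "u x = m powr (-1/p x) * indicator E x" for x
  have ES: "E \<in> sets (lebesgue_on \<Omega>)"
    using E \<Omega> by (subst sets_restrict_space_iff) auto
  have um: "u \<in> borel_measurable (lebesgue_on \<Omega>)"
    unfolding u_def using pm ES by measurable
  have int1: "(\<integral>\<^sup>+ x \<in> \<Omega>. ennreal (\<bar>u x / 1\<bar> powr p x) \<partial>lebesgue) = 1"
  proof -
    have "(\<integral>\<^sup>+ x \<in> \<Omega>. ennreal (\<bar>u x / 1\<bar> powr p x) \<partial>lebesgue)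
        = (\<integral>\<^sup>+ x \<in> E. ennreal (1/m) \<partial>lebesgue)"
    proof (rule nn_integral_cong)
      fix x
      show "ennreal (\<bar>u x / 1\<bar> powr p x) * indicator \<Omega> x = ennreal (1/m) * indicator E x"
      proof (cases "x \<in> E")
        case True
        have p0: "p x \<noteq> 0" using q1[OF True] qp[OF True] by auto
        have "\<bar>u x / 1\<bar> powr p x = (m powr (-1/p x)) powr p x" using True by (simp add: u_def)
        also have "\<dots> = m powr (-1)" using p0 by (simp add: powr_powr)
        also have "\<dots> = 1/m" using m by (simp add: powr_minus_divide)
        finally show ?thesis using True E by auto
      qed (auto simp: u_def)
    qed
    also have "\<dots> = ennreal (1/m) * ennreal m" using E m by (simp add: nn_integral_cmult_indicator)
    also have "\<dots> = 1" using m by (simp flip: ennreal_mult)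
    finally show ?thesis .
  qed
  have n1: "var_norm p \<Omega> u \<le> 1"
    unfolding var_norm_def by (rule Inf_lower) (use int1 in force)
  define c where "c = min 1 (m powr \<delta>)"
  define w where "w = (if m \<le> 1 then m powr (\<delta> - 1) else 1/m)"
  have wm: "c \<le> w * m"
  proof (cases "m \<le> 1")
    case True
    have "w * m = m powr (\<delta> - 1) * m powr 1" using True m by (simp add: w_def)
    also have "\<dots> = m powr (\<delta> - 1 + 1)" using m by (simp only: powr_add)
    also have "\<dots> = m powr \<delta>" by simp
    finally show ?thesis by (simp add: c_def)
  qed (use m in \<open>auto simp: c_def w_def\<close>)
  have c0: "c > 0" using m by (simp add: c_def)
  have n2: "ennreal c \<le> var_norm q \<Omega> (\<lambda>x. u x * indicator E x)"
    unfolding var_norm_def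
  proof (rule Inf_greatest)
    fix z assume "z \<in> {ennreal l |l. l > 0 \<and> (\<integral>\<^sup>+ x \<in> \<Omega>. ennreal (\<bar>u x * indicator E x / l\<bar> powr q x) \<partial>lebesgue) \<le> 1}"
    then obtain l where z: "z = ennreal l" and l0: "l > 0"
      and li: "(\<integral>\<^sup>+ x \<in> \<Omega>. ennreal (\<bar>u x * indicator E x / l\<bar> powr q x) \<partial>lebesgue) \<le> 1"
      by auto
    show "ennreal c \<le> z"
    proof (rule ccontr)
      assume "\<not> ennreal c \<le> z"
      then have lc: "l < c" using z l0 by (simp add: ennreal_le_iff2)
      have l1: "l < 1" using lc by (simp add: c_def)
      have pt: "ennreal (w / l) * indicator E x \<le> ennreal (\<bar>u x * indicator E x / l\<bar> powr q x) * indicator \<Omega> x" for x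
      proof (cases "x \<in> E")
        case True
        define P where "P = p x"
        define Q where "Q = q x"
        have Q1: "1 \<le> Q" and QP: "Q \<le> P" and PQ: "P - Q \<le> \<delta>"
          using q1[OF True] qp[OF True] d(1)[OF True] by (auto simp: P_def Q_def)
        have "\<bar>u x * indicator E x / l\<bar> powr q x = (m powr (-1/P) / l) powr Q"
          using True l0 by (simp add: u_def P_def Q_def)
        also have "\<dots> = m powr (-Q/P) / l powr Q"
          using l0 m Q1 QP by (simp add: powr_divide powr_powr)
        finally have eq: "\<bar>u x * indicator E x / l\<bar> powr q x = m powr (-Q/P) / l powr Q" .
        have lQ: "l powr Q \<le> l" using powr_mono'[of 1 Q l] Q1 l0 l1 by simp
        have mw: "w \<le> m powr (-Q/P)"
        proof -
          have e1: "-Q/P = -1 + (P-Q)/P" using Q1 QP by (simp add: field_simps)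
          have e2: "(P-Q)/P \<le> \<delta>"
          proof -
            have "(P-Q)/P \<le> (P-Q)/1" using Q1 QP by (intro divide_left_mono) auto
            then show ?thesis using PQ by simp
          qed
          have e3: "0 \<le> (P-Q)/P" using Q1 QP by auto
          show ?thesis
          proof (cases "m \<le> 1")
            case True
            then show ?thesis using powr_mono'[of "-Q/P" "\<delta> - 1" m] m e1 e2
              by (simp add: w_def)
          next
            case False
            have "m powr (-1) \<le> m powr (-Q/P)" using powr_mono[of "-1" "-Q/P" m] False e1 e3 by simp
            then show ?thesis using False m by (simp add: w_def powr_minus_divide)
          qed
        qed
        have w0: "0 \<le> w" using m by (simp add: w_def)
        have "w / l \<le> m powr (-Q/P) / l" using mw l0 by (simp add: divide_right_mono)
        also have "\<dots> \<le> m powr (-Q/P) / l powr Q"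
          using lQ l0 by (intro divide_left_mono) auto
        finally show ?thesis using True E eq by auto
      qed auto
      have "ennreal (w / l) * ennreal m = (\<integral>\<^sup>+ x. ennreal (w / l) * indicator E x \<partial>lebesgue)"
        using E m by (simp add: nn_integral_cmult_indicator)
      also have "\<dots> \<le> (\<integral>\<^sup>+ x \<in> \<Omega>. ennreal (\<bar>u x * indicator E x / l\<bar> powr q x) \<partial>lebesgue)"
        by (rule nn_integral_mono[OF pt])
      also have "\<dots> \<le> 1" by (rule li)
      finally have "w / l * m \<le> 1" using m l0
        by (simp add: ennreal_mult[symmetric] w_def)
      then have "w * m \<le> l" using l0 by (simp add: field_simps)
      then show False using wm lc by simp
    qed
  qed
  show ?thesis using um n1 n2 unfolding c_def by blast
qed



lemma epow_le:
  assumes "a > 1" "x \<le> ereal y"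
  shows "epow a x \<le> ennreal (a powr y)"
  using assms by (cases x) (auto simp: epow_def intro!: ennreal_leI powr_mono)

lemma rearr_le:
  assumes "l > 0" "emeasure lebesgue {x \<in> \<Omega>. ereal l < \<bar>f x\<bar>} \<le> ennreal t"
  shows "rearr \<Omega> f t \<le> ereal l"
  unfolding rearr_def by (rule Inf_lower) (use assms in blast)

lemma big_sets:
  fixes \<Omega> :: "'a::euclidean_space set" and s :: "'a \<Rightarrow> ereal"
  assumes a: "a > 1" and T0: "0 \<le> T"
    and inf: "(\<integral>\<^sup>+ t \<in> {0..T}. epow a (rearr \<Omega> s t) \<partial>lborel) = \<infinity>"
  shows "\<exists>l\<ge>L. ennreal (a powr (-2*l)) \<le> emeasure lebesgue {x\<in>\<Omega>. ereal l < \<bar>s x\<bar>}"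
proof (rule ccontr)
  assume "\<not> ?thesis"
  then have H: "\<And>l. l \<ge> L \<Longrightarrow> emeasure lebesgue {x\<in>\<Omega>. ereal l < \<bar>s x\<bar>} < ennreal (a powr (-2*l))"
    by (meson not_le)
  define \<Lambda> where "\<Lambda> = max L 1"
  have la: "ln a > 0" using a by simp
  have pt: "epow a (rearr \<Omega> s t) \<le> ennreal (a powr \<Lambda>) + ennreal (t powr (-1/2))" if t0: "t > 0" for t
  proof -
    define l where "l = max \<Lambda> (- ln t / (2 * ln a))"
    have l1: "l \<ge> L" "l > 0" by (auto simp: l_def \<Lambda>_def)
    have "a powr (-2*l) \<le> a powr (-2 * (- ln t / (2 * ln a)))"
      using a by (intro powr_mono) (auto simp: l_def)
    also have "\<dots> = t" using la t0 a by (simp add: powr_def)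
    finally have "emeasure lebesgue {x\<in>\<Omega>. ereal l < \<bar>s x\<bar>} \<le> ennreal t"
      using H[OF l1(1)] by (meson ennreal_leI less_imp_le order.strict_trans2)
    then have "rearr \<Omega> s t \<le> ereal l" using l1 by (intro rearr_le)
    then have "epow a (rearr \<Omega> s t) \<le> ennreal (a powr l)" using a by (intro epow_le)
    also have "a powr l \<le> a powr \<Lambda> + t powr (-1/2)"
    proof (cases "l = \<Lambda>")
      case True then show ?thesis by simp
    next
      case False
      then have "l = - ln t / (2 * ln a)" by (auto simp: l_def)
      then have "a powr l = t powr (-1/2)" using la t0 a by (simp add: powr_def)
      then show ?thesis by simp
    qed
    then have "ennreal (a powr l) \<le> ennreal (a powr \<Lambda>) + ennreal (t powr (-1/2))"
      by (simp add: ennreal_plus[symmetric] ennreal_leI del: ennreal_plus)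
    finally show ?thesis .
  qed
  have "(\<integral>\<^sup>+ t \<in> {0..T}. epow a (rearr \<Omega> s t) \<partial>lborel)
      \<le> (\<integral>\<^sup>+ t. ennreal (a powr \<Lambda>) * indicator {0..T} t + ennreal (indicator {0..T} t * t powr (-1/2)) \<partial>lborel)"
  proof (rule nn_integral_mono_AE)
    show "AE t in lborel. epow a (rearr \<Omega> s t) * indicator {0..T} t
        \<le> ennreal (a powr \<Lambda>) * indicator {0..T} t + ennreal (indicator {0..T} t * t powr (-1/2))"
      using AE_lborel_singleton[of 0]
    proof eventually_elim
      case (elim t)
      show ?case
      proof (cases "t \<in> {0..T}")
        case True
        then have "t > 0" using elim by auto
        then show ?thesis using pt[of t] True by auto
      qed auto
    qed
  qed
  also have "\<dots> = (\<integral>\<^sup>+ t. ennreal (a powr \<Lambda>) * indicator {0..T} t \<partial>lborel) + (\<integral>\<^sup>+ t. ennreal (indicator {0..T} t * t powr (-1/2)) \<partial>lborel)"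
    by (rule nn_integral_add) auto
  also have "(\<integral>\<^sup>+ t. ennreal (a powr \<Lambda>) * indicator {0..T} t \<partial>lborel) = ennreal (a powr \<Lambda>) * ennreal T"
    using T0 by (simp add: nn_integral_cmult_indicator)
  also have "(\<integral>\<^sup>+ t. ennreal (indicator {0..T} t * t powr (-1/2)) \<partial>lborel) = ennreal (T powr (-1/2 + 1) / (-1/2 + 1))"
    by (rule nn_integral_has_integral_lebesgue) (use has_integral_powr_from_0[of "-1/2" T] T0 in auto)
  finally show False using inf by (simp add: top_unique ennreal_mult_eq_top_iff)
qed



lemma not_ace:
  fixes \<Omega> :: "'a::euclidean_space set" and E :: "nat \<Rightarrow> 'a set"
  assumes E: "\<And>n. E n \<in> sets (lebesgue_on \<Omega>)"
    and AE: "AE x in lebesgue_on \<Omega>. (\<lambda>n. indicator (E n) x :: real) \<longlonglongrightarrow> 0"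
    and c: "c > 0"
    and u: "\<And>n. \<exists>u. u \<in> borel_measurable (lebesgue_on \<Omega>) \<and> var_norm p \<Omega> u \<le> 1 \<and>
                 ennreal c \<le> var_norm q \<Omega> (\<lambda>x. u x * indicator (E n) x)"
  shows "\<not> almost_compact_emb p q \<Omega>"
proof
  assume "almost_compact_emb p q \<Omega>"
  then have T: "(\<lambda>n. SUP u \<in> {u. u \<in> borel_measurable (lebesgue_on \<Omega>) \<and> var_norm p \<Omega> u \<le> 1}.
              var_norm q \<Omega> (\<lambda>x. u x * indicator (E n) x)) \<longlonglongrightarrow> 0"
    using E AE unfolding almost_compact_emb_def by blast
  have "eventually (\<lambda>n. (SUP u \<in> {u. u \<in> borel_measurable (lebesgue_on \<Omega>) \<and> var_norm p \<Omega> u \<le> 1}.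
              var_norm q \<Omega> (\<lambda>x. u x * indicator (E n) x)) < ennreal c) sequentially"
    using order_tendstoD(2)[OF T] c by simp
  then obtain N where "\<And>n. n \<ge> N \<Longrightarrow> (SUP u \<in> {u. u \<in> borel_measurable (lebesgue_on \<Omega>) \<and> var_norm p \<Omega> u \<le> 1}.
              var_norm q \<Omega> (\<lambda>x. u x * indicator (E n) x)) < ennreal c"
    by (auto simp: eventually_sequentially)
  then have lt: "(SUP u \<in> {u. u \<in> borel_measurable (lebesgue_on \<Omega>) \<and> var_norm p \<Omega> u \<le> 1}.
              var_norm q \<Omega> (\<lambda>x. u x * indicator (E N) x)) < ennreal c" by simp
  obtain v where v: "v \<in> borel_measurable (lebesgue_on \<Omega>)" "var_norm p \<Omega> v \<le> 1"
     "ennreal c \<le> var_norm q \<Omega> (\<lambda>x. v x * indicator (E N) x)" using u by blast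
  have "var_norm q \<Omega> (\<lambda>x. v x * indicator (E N) x) \<le> (SUP u \<in> {u. u \<in> borel_measurable (lebesgue_on \<Omega>) \<and> var_norm p \<Omega> u \<le> 1}.
              var_norm q \<Omega> (\<lambda>x. u x * indicator (E N) x))"
    by (rule SUP_upper) (use v in auto)
  then show False using lt v(3) by simp
qed

lemma open_leb: "open (\<Omega>::'a::euclidean_space set) \<Longrightarrow> \<Omega> \<in> sets lebesgue"
  by (simp add: borel_open)



theorem theorem3p7:
  fixes \<Omega> :: "'a::euclidean_space set"
    and p q :: "'a \<Rightarrow> real" and p_plus :: real
    and s :: "'a \<Rightarrow> ereal"
  assumes "open \<Omega>" and "bounded \<Omega>"
    and "p \<in> borel_measurable (lebesgue_on \<Omega>)" and "q \<in> borel_measurable (lebesgue_on \<Omega>)"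
    and "\<And>x. x \<in> \<Omega> \<Longrightarrow> 1 \<le> q x"
    and "\<And>x. x \<in> \<Omega> \<Longrightarrow> q x \<le> p x"
    and "\<And>x. x \<in> \<Omega> \<Longrightarrow> p x \<le> p_plus"
    and "\<And>x. s x = (if p x = q x then \<infinity> else ereal (1 / (p x - q x)))"
    and "\<exists>a > 1. (\<integral>\<^sup>+ t \<in> {0..measure lebesgue \<Omega>}. epow a (rearr \<Omega> s t) \<partial>lborel) = \<infinity>"
  shows "\<not> almost_compact_emb p q \<Omega>"
proof -
  note pm = assms(3) and qm = assms(4) and q1 = assms(5) and qp = assms(6) and sdef = assms(8)
  obtain a where a: "a > 1" and inf: "(\<integral>\<^sup>+ t \<in> {0..measure lebesgue \<Omega>}. epow a (rearr \<Omega> s t) \<partial>lborel) = \<infinity>"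
    using assms(9) by blast
  have \<Omega>L: "\<Omega> \<in> sets lebesgue" using assms(1) by (rule open_leb)
  have \<Omega>fin: "\<Omega> \<in> lmeasurable" using assms(2) \<Omega>L by (rule bounded_set_imp_lmeasurable)
  have subfin: "emeasure lebesgue A = ennreal (measure lebesgue A)" if "A \<in> sets lebesgue" "A \<subseteq> \<Omega>" for A
  proof -
    have "bounded A" using that assms(2) bounded_subset by blast
    then have "A \<in> lmeasurable" using that bounded_set_imp_lmeasurable by blast
    then show ?thesis by (simp add: emeasure_eq_measure2)
  qed
  have setsI: "A \<in> sets lebesgue" if "A \<in> sets (lebesgue_on \<Omega>)" for A
    using that \<Omega>L by (subst (asm) sets_restrict_space_iff) auto
  have setsI2: "A \<subseteq> \<Omega>" if "A \<in> sets (lebesgue_on \<Omega>)" for A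
    using that \<Omega>L by (subst (asm) sets_restrict_space_iff) auto
  define F where "F = {x\<in>\<Omega>. p x = q x}"
  have FS: "F \<in> sets (lebesgue_on \<Omega>)"
  proof -
    have "{x \<in> space (lebesgue_on \<Omega>). p x = q x} \<in> sets (lebesgue_on \<Omega>)"
      using pm qm by measurable
    then show ?thesis by (simp add: F_def)
  qed
  show ?thesis
  proof (cases "emeasure lebesgue F = 0")
    case False
    have "\<exists>x0\<in>F. \<forall>r>0. emeasure lebesgue (F \<inter> ball x0 r) \<noteq> 0"
    proof (rule ccontr)
      assume "\<not> ?thesis"
      then have "\<forall>x\<in>F. \<exists>r>0. emeasure lebesgue (F \<inter> ball x r) = 0" by blast
      then obtain r where r: "\<And>x. x \<in> F \<Longrightarrow> r x > 0 \<and> emeasure lebesgue (F \<inter> ball x (r x)) = 0"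
        by metis
      obtain \<G> where G: "\<G> \<subseteq> (\<lambda>x. ball x (r x)) ` F" "countable \<G>" "\<Union>\<G> = \<Union>((\<lambda>x. ball x (r x)) ` F)"
        using Lindelof[of "(\<lambda>x. ball x (r x)) ` F"] by blast
      have "(\<Union>B\<in>\<G>. F \<inter> B) \<in> null_sets lebesgue"
      proof (rule null_sets_UN')
        show "countable \<G>" by fact
        fix B assume "B \<in> \<G>"
        then obtain x where x: "x \<in> F" "B = ball x (r x)" using G(1) by blast
        have "F \<in> sets lebesgue" using FS by (rule setsI)
        have "F \<inter> ball x (r x) \<in> sets lebesgue" using \<open>F \<in> sets lebesgue\<close> open_leb[of "ball x (r x)"] by auto
        then show "F \<inter> B \<in> null_sets lebesgue" using r[OF x(1)] x by (simp only: null_sets_def) blast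
      qed
      moreover have "F = (\<Union>B\<in>\<G>. F \<inter> B)"
      proof -
        have "F \<subseteq> \<Union>\<G>" using G(3) r by force
        then show ?thesis by blast
      qed
      ultimately have "F \<in> null_sets lebesgue" by simp
      then show False using False by auto
    qed
    then obtain x0 where x0: "x0 \<in> F" "\<And>r. r > 0 \<Longrightarrow> emeasure lebesgue (F \<inter> ball x0 r) \<noteq> 0" by blast
    define E where "E n = F \<inter> ball x0 (1 / Suc n)" for n
    have EL: "E n \<in> sets lebesgue" for n
      using setsI[OF FS] by (auto simp: E_def)
    have ES: "E n \<in> sets (lebesgue_on \<Omega>)" for n
      using EL \<Omega>L by (subst sets_restrict_space_iff) (auto simp: E_def F_def)
    show ?thesis
    proof (rule not_ace[of E])
      show "E n \<in> sets (lebesgue_on \<Omega>)" for n by (rule ES)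
      show "(1::real) > 0" by simp
      show "AE x in lebesgue_on \<Omega>. (\<lambda>n. indicator (E n) x :: real) \<longlonglongrightarrow> 0"
      proof (rule AE_I')
        show "{x0} \<in> null_sets (lebesgue_on \<Omega>)"
          using \<Omega>L x0(1) by (subst null_sets_restrict_space) (auto simp: F_def)
        show "{x \<in> space (lebesgue_on \<Omega>). \<not> (\<lambda>n. indicator (E n) x :: real) \<longlonglongrightarrow> 0} \<subseteq> {x0}"
        proof clarify
          fix x assume x: "x \<in> space (lebesgue_on \<Omega>)" and nt: "\<not> (\<lambda>n. indicator (E n) x :: real) \<longlonglongrightarrow> 0"
          show "x = x0"
          proof (rule ccontr)
            assume "x \<noteq> x0"
            then have d: "dist x0 x > 0" by simp
            then obtain N where N: "inverse (real (Suc N)) < dist x0 x" using reals_Archimedean by blast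
            have "eventually (\<lambda>n. indicator (E n) x = (0::real)) sequentially"
              unfolding eventually_sequentially
            proof (intro exI allI impI)
              fix n assume "N \<le> n"
              then have "1 / real (Suc n) \<le> inverse (real (Suc N))"
                by (simp add: divide_simps)
              then have "x \<notin> E n" using N by (auto simp: E_def)
              then show "indicator (E n) x = (0::real)" by simp
            qed
            then have "(\<lambda>n. indicator (E n) x :: real) \<longlonglongrightarrow> 0" by (rule tendsto_eventually)
            then show False using nt by simp
          qed
        qed
      qed
      fix n
      define m where "m = measure lebesgue (E n)"
      have Em: "emeasure lebesgue (E n) = ennreal m"
        unfolding m_def using EL by (rule subfin) (auto simp: E_def F_def)
      have m0: "m > 0"
        using x0(2)[of "1 / Suc n"] Em by (auto simp: E_def ennreal_eq_0_iff)
      have "\<exists>u. u \<in> borel_measurable (lebesgue_on \<Omega>) \<and> var_norm p \<Omega> u \<le> 1 \<and>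
           ennreal (min 1 (m powr 0)) \<le> var_norm q \<Omega> (\<lambda>x. u x * indicator (E n) x)"
        by (rule keyK[OF \<Omega>L EL _ Em m0 pm]) (auto simp: E_def F_def q1 qp)
      then show "\<exists>u. u \<in> borel_measurable (lebesgue_on \<Omega>) \<and> var_norm p \<Omega> u \<le> 1 \<and>
           ennreal 1 \<le> var_norm q \<Omega> (\<lambda>x. u x * indicator (E n) x)"
        using m0 by simp
    qed
  next
    case True
    have Fnull: "F \<in> null_sets lebesgue" using True setsI[OF FS] by auto
    have "\<forall>k::nat. \<exists>l\<ge>real k + 1. ennreal (a powr (-2*l)) \<le> emeasure lebesgue {x\<in>\<Omega>. ereal l < \<bar>s x\<bar>}"
      using big_sets[OF a _ inf] by auto
    then obtain lam where lam: "\<And>k. lam k \<ge> real k + 1"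
      "\<And>k. ennreal (a powr (-2*lam k)) \<le> emeasure lebesgue {x\<in>\<Omega>. ereal (lam k) < \<bar>s x\<bar>}"
      by metis
    define E where "E k = {x\<in>\<Omega>. ereal (lam k) < \<bar>s x\<bar>}" for k
    have Eeq: "E k = {x \<in> space (lebesgue_on \<Omega>). p x - q x < 1 / lam k}" for k
    proof -
      have l0: "lam k > 0" using lam(1)[of k] by linarith
      have "ereal (lam k) < \<bar>s x\<bar> \<longleftrightarrow> p x - q x < 1 / lam k" if "x \<in> \<Omega>" for x
      proof (cases "p x = q x")
        case True then show ?thesis using l0 sdef[of x] by simp
      next
        case False
        then have pq: "p x - q x > 0" using qp[OF that] by simp
        then have "ereal (lam k) < \<bar>s x\<bar> \<longleftrightarrow> lam k < 1 / (p x - q x)" using sdef[of x] False by simp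
        also have "\<dots> \<longleftrightarrow> p x - q x < 1 / lam k" using pq l0 by (simp add: field_simps)
        finally show ?thesis .
      qed
      then show ?thesis by (auto simp: E_def)
    qed
    have ES: "E k \<in> sets (lebesgue_on \<Omega>)" for k
      unfolding Eeq using pm qm by measurable
    have EL: "E k \<in> sets lebesgue" for k using ES by (rule setsI)
    have EO: "E k \<subseteq> \<Omega>" for k by (auto simp: E_def)
    show ?thesis
    proof (rule not_ace[of E])
      show "E n \<in> sets (lebesgue_on \<Omega>)" for n by (rule ES)
      show "a powr (-2) > 0" using a by simp
      show "AE x in lebesgue_on \<Omega>. (\<lambda>n. indicator (E n) x :: real) \<longlonglongrightarrow> 0"
      proof (rule AE_I')
        show "F \<in> null_sets (lebesgue_on \<Omega>)"
          using \<Omega>L Fnull by (subst null_sets_restrict_space) (auto simp: F_def)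
        show "{x \<in> space (lebesgue_on \<Omega>). \<not> (\<lambda>n. indicator (E n) x :: real) \<longlonglongrightarrow> 0} \<subseteq> F"
        proof clarify
          fix x assume x: "x \<in> space (lebesgue_on \<Omega>)" and nt: "\<not> (\<lambda>n. indicator (E n) x :: real) \<longlonglongrightarrow> 0"
          show "x \<in> F"
          proof (rule ccontr)
            assume "x \<notin> F"
            then have xO: "x \<in> \<Omega>" and d: "p x - q x > 0" using x qp[of x] by (auto simp: F_def)
            then obtain N where N: "inverse (real (Suc N)) < p x - q x" using reals_Archimedean by blast
            have "eventually (\<lambda>n. indicator (E n) x = (0::real)) sequentially"
              unfolding eventually_sequentially
            proof (intro exI allI impI)
              fix n assume "N \<le> n"
              then have "1 / lam n \<le> inverse (real (Suc N))"
                using lam(1)[of n] by (simp add: divide_simps)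
              then have "x \<notin> E n" using N unfolding Eeq by auto
              then show "indicator (E n) x = (0::real)" by simp
            qed
            then have "(\<lambda>n. indicator (E n) x :: real) \<longlonglongrightarrow> 0" by (rule tendsto_eventually)
            then show False using nt by simp
          qed
        qed
      qed
      fix n
      define m where "m = measure lebesgue (E n)"
      have l0: "lam n > 0" using lam(1)[of n] by linarith
      have Em: "emeasure lebesgue (E n) = ennreal m"
        unfolding m_def using EL EO by (rule subfin)
      have am: "a powr (-2 * lam n) \<le> m"
        using lam(2)[of n] Em unfolding E_def[symmetric] using a by (simp add: ennreal_le_iff2)
      have m0: "m > 0" using am a powr_gt_zero[of a "-2 * lam n"] by linarith
      have "\<exists>u. u \<in> borel_measurable (lebesgue_on \<Omega>) \<and> var_norm p \<Omega> u \<le> 1 \<and>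
           ennreal (min 1 (m powr (1 / lam n))) \<le> var_norm q \<Omega> (\<lambda>x. u x * indicator (E n) x)"
        by (rule keyK[OF \<Omega>L EL EO Em m0 pm]) (use l0 in \<open>auto simp: Eeq q1 qp\<close>)
      moreover have "a powr (-2) \<le> min 1 (m powr (1 / lam n))"
      proof -
        have "a powr (-2) \<le> 1" using a powr_mono[of "-2" 0 a] by simp
        moreover have "a powr (-2) \<le> m powr (1 / lam n)"
        proof -
          have "a powr (-2) = (a powr (-2 * lam n)) powr (1 / lam n)"
            using l0 by (simp add: powr_powr)
          also have "\<dots> \<le> m powr (1 / lam n)" using am l0 by (intro powr_mono2) auto
          finally show ?thesis .
        qed
        ultimately show ?thesis by simp
      qed
      ultimately show "\<exists>u. u \<in> borel_measurable (lebesgue_on \<Omega>) \<and> var_norm p \<Omega> u \<le> 1 \<and>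
           ennreal (a powr (-2)) \<le> var_norm q \<Omega> (\<lambda>x. u x * indicator (E n) x)"
        by (meson ennreal_leI order_trans)
    qed
  qed
qed


end
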